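(* Let $n\ge1$ and $1\le i\le n$. A vector $\mu=\sum_{k=1}^n a_k\lambda_k$ (with real coefficients $a_k$) is a positive weight of the $i$-th fundamental representation $\Lambda_i$ of $a_n$ if and only if the following hold: (1) every $a_k\in\{-1,0,1\}$, not all $a_k$ are zero, the coefficient $a_k$ with the largest index $k$ among the nonzero ones equals $+1$, and the nonzero coefficients alternate in sign when ordered by their index $k$ (so the next largest nonzero one is $-1$, the next $+1$, and so on); and (2) $\sum_{k=1}^n k\,a_k=i$.
   Context: Let $e_1,\dots,e_{n+1}$ be an orthonormal basis of $\mathbb{R}^{n+1}$, $e=\sum_{i}e_i$, and $\varepsilon_i=e_i-\frac{1}{n+1}e$ ($i=1,\dots,n+1$), so that $\sum_{i=1}^{n+1}\varepsilon_i=0$; the root space of $a_n=\mathfrak{sl}_{n+1}(\mathbb C)$ is the hyperplane orthogonal to $e$. Simple roots: $\alpha_i=\varepsilon_i-\varepsilon_{i+1}$, $i=1,\dots,n$. Fundamental weights: $\lambda_i=\sum_{a=1}^i\varepsilon_a$, characterized by $\lambda_i\cdot\alpha_j=\delta_{ij}$. The $i$-th fundamental representation $\Lambda_i$ is the irreducible representation with highest weight $\lambda_i$; its weights are exactly the vectors $\sum_{k\in S}\varepsilon_k$ with $S\subseteq\{1,\dots,n+1\}$, $|S|=i$, and this set $S$ is uniquely determined by the weight. Such a weight is called positive if $n+1\notin S$, i.e. its coefficient of $\varepsilon_{n+1}$ in this $0/1$ expansion is $0$. *)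

theory Defs
  imports Complex_Main
begin

text \<open>Vectors of R^(n+1) are modelled as functions nat => real whose coordinates
  are indexed by 1..n+1 (and are 0 outside this range).\<close>

definition eps :: "nat \<Rightarrow> nat \<Rightarrow> (nat \<Rightarrow> real)" where
  "eps n i = (\<lambda>j. if j \<in> {1..n+1} then (if j = i then 1 else 0) - 1 / real (n+1) else 0)"

definition fund_weight :: "nat \<Rightarrow> nat \<Rightarrow> (nat \<Rightarrow> real)" where
  "fund_weight n k = (\<lambda>j. \<Sum>a=1..k. eps n a j)"

definition vec_of_coeffs :: "nat \<Rightarrow> (nat \<Rightarrow> real) \<Rightarrow> (nat \<Rightarrow> real)" where
  "vec_of_coeffs n a = (\<lambda>j. \<Sum>k=1..n. a k * fund_weight n k j)"

definition subset_weight :: "nat \<Rightarrow> nat set \<Rightarrow> (nat \<Rightarrow> real)" where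
  "subset_weight n S = (\<lambda>j. \<Sum>k\<in>S. eps n k j)"

definition is_weight :: "nat \<Rightarrow> nat \<Rightarrow> (nat \<Rightarrow> real) \<Rightarrow> bool" where
  "is_weight n i \<mu> \<longleftrightarrow> (\<exists>S. S \<subseteq> {1..n+1} \<and> card S = i \<and> \<mu> = subset_weight n S)"

definition positive_weight :: "nat \<Rightarrow> nat \<Rightarrow> (nat \<Rightarrow> real) \<Rightarrow> bool" where
  "positive_weight n i \<mu> \<longleftrightarrow> is_weight n i \<mu> \<and>
     n+1 \<notin> (THE S. S \<subseteq> {1..n+1} \<and> card S = i \<and> \<mu> = subset_weight n S)"

end

theory Submission imports Defs begin

definition cs :: "(nat \<Rightarrow> real) \<Rightarrow> nat \<Rightarrow> nat \<Rightarrow> real" where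
  "cs a n j = (\<Sum>k=j..n. a k)"

lemma cs_step: "j \<le> n \<Longrightarrow> cs a n j = a j + cs a n (Suc j)"
  unfolding cs_def by (simp add: sum.atLeast_Suc_atMost)

lemma cs_top: "cs a n (Suc n) = 0"
  unfolding cs_def by simp

lemma eps_in: "1 \<le> j \<Longrightarrow> j \<le> n+1 \<Longrightarrow> eps n b j = (if j = b then 1 else 0) - 1 / real (n+1)"
  unfolding eps_def by simp

lemma fw: "1 \<le> j \<Longrightarrow> j \<le> n+1 \<Longrightarrow> fund_weight n k j = (if j \<le> k then 1 else 0) - real k / real (n+1)"
  unfolding fund_weight_def by (simp add: eps_in sum_subtractf)

lemma vec_in: assumes "1 \<le> j" "j \<le> n+1"
  shows "vec_of_coeffs n a j = cs a n j - (\<Sum>k=1..n. real k * a k) / real (n+1)"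
proof -
  have "vec_of_coeffs n a j = (\<Sum>k=1..n. (if j \<le> k then a k else 0) - (real k * a k) / real (n+1))"
    unfolding vec_of_coeffs_def using assms by (intro sum.cong) (auto simp: fw algebra_simps)
  also have "\<dots> = (\<Sum>k=1..n. (if j \<le> k then a k else 0)) - (\<Sum>k=1..n. real k * a k) / real (n+1)"
    by (simp add: sum_subtractf sum_divide_distrib)
  also have "(\<Sum>k=1..n. (if j \<le> k then a k else 0)) = (\<Sum>k\<in>{k\<in>{1..n}. j \<le> k}. a k)"
    by (subst sum.inter_filter) auto
  also have "{k\<in>{1..n}. j \<le> k} = {j..n}" using assms by auto
  finally show ?thesis unfolding cs_def .
qed

lemma vec_out: assumes "j \<notin> {1..n+1}" shows "vec_of_coeffs n a j = 0"
proof -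
  have "\<not>(Suc 0 \<le> j \<and> j \<le> Suc n)" using assms by auto
  then have "\<And>b. eps n b j = 0" unfolding eps_def by auto
  then show ?thesis unfolding vec_of_coeffs_def fund_weight_def by simp
qed

lemma sw_in: assumes "S \<subseteq> {1..n+1}" "1 \<le> j" "j \<le> n+1"
  shows "subset_weight n S j = (if j \<in> S then 1 else 0) - real (card S) / real (n+1)"
proof -
  have fin: "finite S" using assms(1) finite_subset by blast
  have "subset_weight n S j = (\<Sum>k\<in>S. (if j = k then 1 else 0) - 1 / real (n+1))"
    unfolding subset_weight_def using assms by (simp add: eps_in)
  also have "\<dots> = (if j \<in> S then 1 else 0) - real (card S) / real (n+1)"
    using fin by (simp add: sum_subtractf)
  finally show ?thesis .
qed

lemma sw_out: assumes "j \<notin> {1..n+1}" shows "subset_weight n S j = 0"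
proof -
  have "\<not>(Suc 0 \<le> j \<and> j \<le> Suc n)" using assms by auto
  then have "\<And>b. eps n b j = 0" unfolding eps_def by auto
  then show ?thesis unfolding subset_weight_def by simp
qed

lemma uniq: assumes "S \<subseteq> {1..n+1}" "T \<subseteq> {1..n+1}" "card S = card T"
  "subset_weight n S = subset_weight n T" shows "S = T"
proof -
  have "x \<in> S \<longleftrightarrow> x \<in> T" if "x \<in> {1..n+1}" for x
  proof -
    have "subset_weight n S x = subset_weight n T x" using assms(4) by simp
    moreover have "subset_weight n S x = (if x \<in> S then 1 else 0) - real (card S) / real (n+1)"
      using that assms(1) by (intro sw_in) auto
    moreover have "subset_weight n T x = (if x \<in> T then 1 else 0) - real (card T) / real (n+1)"
      using that assms(2) by (intro sw_in) auto
    ultimately show ?thesis using assms(3) by (auto split: if_splits)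
  qed
  then show ?thesis using assms(1,2) by blast
qed

lemma pos_iff: "positive_weight n i \<mu> \<longleftrightarrow> (\<exists>S. S \<subseteq> {1..n} \<and> card S = i \<and> \<mu> = subset_weight n S)"
proof
  assume "positive_weight n i \<mu>"
  then obtain S where S: "S \<subseteq> {1..n+1}" "card S = i" "\<mu> = subset_weight n S"
    and nt: "n+1 \<notin> (THE S. S \<subseteq> {1..n+1} \<and> card S = i \<and> \<mu> = subset_weight n S)"
    unfolding positive_weight_def is_weight_def by blast
  have "(THE S. S \<subseteq> {1..n+1} \<and> card S = i \<and> \<mu> = subset_weight n S) = S"
    by (rule the_equality) (use S in simp, metis S uniq)
  with nt have "n+1 \<notin> S" by simp
  with S(1) have "S \<subseteq> {1..n}" by (auto simp: subset_iff le_Suc_eq)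
  with S show "\<exists>S. S \<subseteq> {1..n} \<and> card S = i \<and> \<mu> = subset_weight n S"
    by blast
next
  assume "\<exists>S. S \<subseteq> {1..n} \<and> card S = i \<and> \<mu> = subset_weight n S"
  then obtain S where S: "S \<subseteq> {1..n}" "card S = i" "\<mu> = subset_weight n S" by blast
  have S': "S \<subseteq> {1..n+1}" using S by auto
  have "(THE S. S \<subseteq> {1..n+1} \<and> card S = i \<and> \<mu> = subset_weight n S) = S"
    by (rule the_equality) (use S S' in simp, metis S S' uniq)
  then show "positive_weight n i \<mu>" unfolding positive_weight_def is_weight_def
    using S S' by auto
qed


lemma cs_Suc: "j \<le> Suc n \<Longrightarrow> cs a (Suc n) j = cs a n j + a (Suc n)"
  unfolding cs_def by (simp add: sum.atLeast_Suc_atMost_Suc_shift del: sum.atLeast_Suc_atMost_Suc_shift)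

lemma sum_cs: "(\<Sum>j=1..n. cs a n j) = (\<Sum>k=1..n. real k * a k)"
proof (induction n)
  case 0
  then show ?case by simp
next
  case (Suc n)
  have "(\<Sum>j=1..Suc n. cs a (Suc n) j) = (\<Sum>j=1..Suc n. cs a n j + a (Suc n))"
    by (intro sum.cong) (auto simp: cs_Suc)
  also have "\<dots> = (\<Sum>j=1..n. cs a n j) + cs a n (Suc n) + real (Suc n) * a (Suc n)"
    by (simp add: sum.distrib)
  also have "\<dots> = (\<Sum>k=1..Suc n. real k * a k)" using Suc by (simp add: cs_top)
  finally show ?case .
qed

lemma cs_const: assumes "\<forall>m. p \<le> m \<and> m < l \<longrightarrow> a m = 0" "p \<le> l" "l \<le> n+1"
  shows "cs a n p = cs a n l"
  using assms(2)
proof (induction rule: dec_induct)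
  case base
  then show ?case by simp
next
  case (step m)
  then show ?case using assms cs_step[of m n a] by simp
qed

lemma least_ex: assumes "P l" "p \<le> (l::nat)"
  shows "\<exists>l. P l \<and> p \<le> l \<and> (\<forall>m. p \<le> m \<and> m < l \<longrightarrow> \<not> P m)"
proof -
  let ?Q = "\<lambda>l. P l \<and> p \<le> l"
  have "?Q (LEAST l. ?Q l)" by (rule LeastI[of ?Q l]) (use assms in auto)
  moreover have "\<forall>m. p \<le> m \<and> m < (LEAST l. ?Q l) \<longrightarrow> \<not> P m"
    using not_less_Least[of _ ?Q] by blast
  ultimately show ?thesis by blast
qed

lemma vec_eq_iff:
  "(\<exists>S. S \<subseteq> {1..n} \<and> card S = i \<and> vec_of_coeffs n a = subset_weight n S) \<longleftrightarrow>
   (\<Sum>k=1..n. real k * a k) = real i \<and> (\<forall>j\<in>{1..n}. cs a n j = 0 \<or> cs a n j = 1)"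
  (is "?L \<longleftrightarrow> ?W = _ \<and> ?C")
proof
  assume ?L
  then obtain S where S: "S \<subseteq> {1..n}" "card S = i" "vec_of_coeffs n a = subset_weight n S" by blast
  have S': "S \<subseteq> {1..n+1}" using S by auto
  have e: "vec_of_coeffs n a (n+1) = subset_weight n S (n+1)" using S by simp
  have "n+1 \<notin> S" using S by auto
  have "vec_of_coeffs n a (n+1) = - ?W / real (n+1)" by (simp add: vec_in cs_top)
  moreover have "subset_weight n S (n+1) = - real i / real (n+1)"
    using S' S(2) \<open>n+1 \<notin> S\<close> by (simp add: sw_in)
  ultimately have "- ?W / real (n+1) = - real i / real (n+1)" using e by simp
  then have W: "?W = real i" by (simp add: field_simps)
  have "cs a n j = 0 \<or> cs a n j = 1" if "j \<in> {1..n}" for j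
  proof -
    have e: "vec_of_coeffs n a j = subset_weight n S j" using S by simp
    have "vec_of_coeffs n a j = cs a n j - ?W / real (n+1)" using that by (simp add: vec_in)
    moreover have "subset_weight n S j = (if j \<in> S then 1 else 0) - real i / real (n+1)"
      using that S' S(2) by (simp add: sw_in)
    ultimately have "cs a n j - ?W / real (n+1) = (if j \<in> S then 1 else 0) - real i / real (n+1)"
      using e by simp
    then show ?thesis using W by (auto split: if_splits)
  qed
  with W show "?W = real i \<and> ?C" by blast
next
  assume A: "?W = real i \<and> ?C"
  define S where "S = {j\<in>{1..n}. cs a n j = 1}"
  have S1: "S \<subseteq> {1..n}" "S \<subseteq> {1..n+1}" unfolding S_def by auto
  have "real (card S) = (\<Sum>j\<in>{1..n}. if cs a n j = 1 then 1 else 0)"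
    unfolding S_def by (simp add: sum.If_cases Int_def conj_commute)
  also have "\<dots> = (\<Sum>j=1..n. cs a n j)" using A by (intro sum.cong) auto
  also have "\<dots> = real i" using A sum_cs by simp
  finally have cS: "card S = i" by simp
  have "vec_of_coeffs n a = subset_weight n S"
  proof
    fix j
    show "vec_of_coeffs n a j = subset_weight n S j"
    proof (cases "j \<in> {1..n+1}")
      case True
      then have "cs a n j = (if j \<in> S then 1 else 0)"
        using A unfolding S_def
        by (cases "j = n+1") (auto simp: cs_top)
      then show ?thesis using True S1 cS A by (simp add: vec_in sw_in)
    next
      case False
      then show ?thesis by (simp add: vec_out sw_out)
    qed
  qed
  with S1 cS show ?L by blast
qed


lemma comb1:
  assumes C: "\<forall>j\<in>{1..n}. cs a n j = 0 \<or> cs a n j = 1"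
  shows "\<forall>k\<in>{1..n}. a k \<in> {-1, 0, 1}"
    and "(\<exists>k\<in>{1..n}. a k \<noteq> 0) \<Longrightarrow> a (Max {k\<in>{1..n}. a k \<noteq> 0}) = 1"
    and "\<forall>k\<in>{1..n}. \<forall>l\<in>{1..n}. k < l \<and> a k \<noteq> 0 \<and> a l \<noteq> 0
            \<and> (\<forall>m. k < m \<and> m < l \<longrightarrow> a m = 0) \<longrightarrow> a k = - a l"
proof -
  have C': "cs a n j = 0 \<or> cs a n j = 1" if "1 \<le> j" "j \<le> n+1" for j
  proof (cases "j = n+1")
    case True
    then show ?thesis using cs_top[of a n] by simp
  next
    case False
    then have "j \<in> {1..n}" using that by simp
    then show ?thesis using C by blast
  qed
  show "\<forall>k\<in>{1..n}. a k \<in> {-1, 0, 1}"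
  proof
    fix k assume k: "k \<in> {1..n}"
    have "a k = cs a n k - cs a n (Suc k)" using k cs_step[of k n a] by simp
    moreover have "cs a n k = 0 \<or> cs a n k = 1" using k by (intro C') simp_all
    moreover have "cs a n (Suc k) = 0 \<or> cs a n (Suc k) = 1" using k by (intro C') simp_all
    ultimately have "a k = -1 \<or> a k = 0 \<or> a k = 1" by linarith
    then show "a k \<in> {-1, 0, 1}" by simp
  qed
  show "a (Max {k\<in>{1..n}. a k \<noteq> 0}) = 1" if ex: "\<exists>k\<in>{1..n}. a k \<noteq> 0"
  proof -
    let ?A = "{k\<in>{1..n}. a k \<noteq> 0}"
    let ?m = "Max ?A"
    have fin: "finite ?A" by simp
    have ne: "?A \<noteq> {}" using ex by blast
    have mA: "?m \<in> ?A" using Max_in[OF fin ne] .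
    have above: "a k = 0" if "?m < k" "k \<le> n" for k
    proof (rule ccontr)
      assume "a k \<noteq> 0"
      then have "k \<in> ?A" using that mA by auto
      then have "k \<le> ?m" using Max_ge[OF fin] by blast
      then show False using that by simp
    qed
    have mn: "?m \<le> n" using mA by simp
    have z: "\<forall>x. Suc ?m \<le> x \<and> x < n+1 \<longrightarrow> a x = 0"
    proof (intro allI impI)
      fix x assume "Suc ?m \<le> x \<and> x < n+1"
      then show "a x = 0" by (intro above) simp_all
    qed
    have "cs a n (Suc ?m) = cs a n (n+1)"
      by (rule cs_const[OF z]) (use mn in simp_all)
    then have "cs a n (Suc ?m) = 0" by (simp add: cs_top)
    moreover have "a ?m = cs a n ?m - cs a n (Suc ?m)" using mA cs_step[of ?m n a] by simp
    moreover have "a ?m \<noteq> 0" using mA by simp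
    moreover have "cs a n ?m = 0 \<or> cs a n ?m = 1" using mA by (intro C') auto
    ultimately show ?thesis by linarith
  qed
  show "\<forall>k\<in>{1..n}. \<forall>l\<in>{1..n}. k < l \<and> a k \<noteq> 0 \<and> a l \<noteq> 0
            \<and> (\<forall>m. k < m \<and> m < l \<longrightarrow> a m = 0) \<longrightarrow> a k = - a l"
  proof (intro ballI impI)
    fix k l assume kl: "k \<in> {1..n}" "l \<in> {1..n}"
      and h: "k < l \<and> a k \<noteq> 0 \<and> a l \<noteq> 0 \<and> (\<forall>m. k < m \<and> m < l \<longrightarrow> a m = 0)"
    have z: "\<forall>x. Suc k \<le> x \<and> x < l \<longrightarrow> a x = 0"
    proof (intro allI impI)
      fix x assume "Suc k \<le> x \<and> x < l"
      then show "a x = 0" using h[THEN conjunct2, THEN conjunct2, THEN conjunct2] by simp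
    qed
    have "cs a n (Suc k) = cs a n l" by (rule cs_const[OF z]) (use h kl in simp_all)
    moreover have "a k = cs a n k - cs a n (Suc k)" using kl cs_step[of k n a] by simp
    moreover have "a l = cs a n l - cs a n (Suc l)" using kl cs_step[of l n a] by simp
    moreover have "cs a n k = 0 \<or> cs a n k = 1" using kl by (intro C') auto
    moreover have "cs a n l = 0 \<or> cs a n l = 1" using kl by (intro C') auto
    moreover have "cs a n (Suc l) = 0 \<or> cs a n (Suc l) = 1" using kl by (intro C') auto
    moreover have "a k \<noteq> 0" "a l \<noteq> 0" using h by auto
    ultimately show "a k = - a l" by linarith
  qed
qed

lemma comb2:
  assumes A: "\<forall>k\<in>{1..n}. a k \<in> {-1, 0, 1}"
    and M: "(\<exists>k\<in>{1..n}. a k \<noteq> 0) \<Longrightarrow> a (Max {k\<in>{1..n}. a k \<noteq> 0}) = 1"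
    and Alt: "\<forall>k\<in>{1..n}. \<forall>l\<in>{1..n}. k < l \<and> a k \<noteq> 0 \<and> a l \<noteq> 0
            \<and> (\<forall>m. k < m \<and> m < l \<longrightarrow> a m = 0) \<longrightarrow> a k = - a l"
  shows "\<forall>j\<in>{1..n}. cs a n j = 0 \<or> cs a n j = 1"
proof -
  let ?P = "\<lambda>j. (cs a n j = 0 \<or> cs a n j = 1) \<and>
     (\<forall>l\<in>{j..n}. a l \<noteq> 0 \<and> (\<forall>m. j \<le> m \<and> m < l \<longrightarrow> a m = 0) \<longrightarrow> a l = 2 * cs a n j - 1)"
  have Pj: "?P j" if "1 \<le> j" "j \<le> n+1" for j
    using that(2)
  proof (induction rule: inc_induct)
    case base
    then show ?case by (simp add: cs_top)
  next
    case (step m)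
    have m1: "1 \<le> m" "m \<le> n" using step.hyps that(1) by auto
    have cm: "cs a n m = a m + cs a n (Suc m)" using m1 cs_step by blast
    have IH1: "cs a n (Suc m) = 0 \<or> cs a n (Suc m) = 1" using step.IH by blast
    have IH2: "\<And>l. l \<in> {Suc m..n} \<Longrightarrow> a l \<noteq> 0 \<Longrightarrow> (\<forall>x. Suc m \<le> x \<and> x < l \<longrightarrow> a x = 0)
       \<Longrightarrow> a l = 2 * cs a n (Suc m) - 1" using step.IH by blast
    show ?case
    proof (cases "a m = 0")
      case True
      have "a l = 2 * cs a n m - 1" if "l \<in> {m..n}" "a l \<noteq> 0" "\<forall>x. m \<le> x \<and> x < l \<longrightarrow> a x = 0" for l
      proof -
        have "l \<noteq> m" using True that by auto
        then have "l \<in> {Suc m..n}" using that by auto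
        then show ?thesis using IH2[of l] that True cm by auto
      qed
      then show "?P m" using True cm IH1 by auto
    next
      case False
      have am: "a m = 1 \<or> a m = -1" using A m1 False by auto
      have key: "(cs a n m = 0 \<or> cs a n m = 1) \<and> a m = 2 * cs a n m - 1"
      proof (cases "\<exists>l. (a l \<noteq> 0 \<and> l \<le> n) \<and> Suc m \<le> l")
        case True
        then obtain l0 where "(a l0 \<noteq> 0 \<and> l0 \<le> n) \<and> Suc m \<le> l0" by blast
        from least_ex[of "\<lambda>l. a l \<noteq> 0 \<and> l \<le> n", OF this[THEN conjunct1] this[THEN conjunct2]]
        obtain l where l: "a l \<noteq> 0" "l \<le> n" "Suc m \<le> l"
          and lmin: "\<forall>x. Suc m \<le> x \<and> x < l \<longrightarrow> \<not> (a x \<noteq> 0 \<and> x \<le> n)" by blast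
        have z: "\<forall>x. Suc m \<le> x \<and> x < l \<longrightarrow> a x = 0" using lmin l by auto
        have "a m = - a l" using Alt m1 l False z by auto
        moreover have "a l = 2 * cs a n (Suc m) - 1" using IH2[of l] l z by auto
        ultimately show ?thesis using cm IH1 by auto
      next
        case False
        then have z: "\<forall>x. Suc m \<le> x \<and> x < n+1 \<longrightarrow> a x = 0" by (auto simp: less_Suc_eq_le)
        have "cs a n (Suc m) = cs a n (n+1)" by (rule cs_const) (use z m1 in auto)
        then have c0: "cs a n (Suc m) = 0" by (simp add: cs_top)
        have "Max {k\<in>{1..n}. a k \<noteq> 0} = m"
          by (rule Max_eqI) (use z m1 \<open>a m \<noteq> 0\<close> in \<open>auto simp: not_less_eq_eq[symmetric]\<close>)
        moreover have "\<exists>k\<in>{1..n}. a k \<noteq> 0" using m1 \<open>a m \<noteq> 0\<close> by auto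
        ultimately have "a m = 1" using M by simp
        then show ?thesis using cm c0 by auto
      qed
      have "a l = 2 * cs a n m - 1" if "l \<in> {m..n}" "a l \<noteq> 0" "\<forall>x. m \<le> x \<and> x < l \<longrightarrow> a x = 0" for l
      proof -
        have "l = m" using that False by (metis atLeastAtMost_iff le_neq_implies_less order_refl)
        then show ?thesis using key by simp
      qed
      then show "?P m" using key by blast
    qed
  qed
  show ?thesis
  proof
    fix j assume "j \<in> {1..n}"
    then have "1 \<le> j" "j \<le> n+1" by simp_all
    from Pj[OF this] show "cs a n j = 0 \<or> cs a n j = 1" by (rule conjunct1)
  qed
qed


theorem mainTheorem2:
  fixes n i :: nat and a :: "nat \<Rightarrow> real"
  assumes "1 \<le> n" and "1 \<le> i" and "i \<le> n"
  shows "positive_weight n i (vec_of_coeffs n a) \<longleftrightarrow>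
    ((\<forall>k\<in>{1..n}. a k \<in> {-1, 0, 1})
     \<and> (\<exists>k\<in>{1..n}. a k \<noteq> 0)
     \<and> a (Max {k\<in>{1..n}. a k \<noteq> 0}) = 1
     \<and> (\<forall>k\<in>{1..n}. \<forall>l\<in>{1..n}. k < l \<and> a k \<noteq> 0 \<and> a l \<noteq> 0
            \<and> (\<forall>m. k < m \<and> m < l \<longrightarrow> a m = 0) \<longrightarrow> a k = - a l)
     \<and> (\<Sum>k=1..n. real k * a k) = real i)"
proof -
  have L: "positive_weight n i (vec_of_coeffs n a) \<longleftrightarrow>
     (\<Sum>k=1..n. real k * a k) = real i \<and> (\<forall>j\<in>{1..n}. cs a n j = 0 \<or> cs a n j = 1)"
    by (simp only: pos_iff vec_eq_iff)
  show ?thesis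
  proof
    assume "positive_weight n i (vec_of_coeffs n a)"
    then have W: "(\<Sum>k=1..n. real k * a k) = real i" and C: "\<forall>j\<in>{1..n}. cs a n j = 0 \<or> cs a n j = 1"
      using L by simp_all
    have E: "\<exists>k\<in>{1..n}. a k \<noteq> 0"
    proof (rule ccontr)
      assume "\<not> (\<exists>k\<in>{1..n}. a k \<noteq> 0)"
      then have "(\<Sum>k=1..n. real k * a k) = 0" by simp
      then show False using W assms by simp
    qed
    show "(\<forall>k\<in>{1..n}. a k \<in> {-1, 0, 1})
     \<and> (\<exists>k\<in>{1..n}. a k \<noteq> 0)
     \<and> a (Max {k\<in>{1..n}. a k \<noteq> 0}) = 1
     \<and> (\<forall>k\<in>{1..n}. \<forall>l\<in>{1..n}. k < l \<and> a k \<noteq> 0 \<and> a l \<noteq> 0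
            \<and> (\<forall>m. k < m \<and> m < l \<longrightarrow> a m = 0) \<longrightarrow> a k = - a l)
     \<and> (\<Sum>k=1..n. real k * a k) = real i"
      by (intro conjI; (fact comb1(1)[OF C] | fact E | fact comb1(2)[OF C E] | fact comb1(3)[OF C] | fact W))
  next
    assume R: "(\<forall>k\<in>{1..n}. a k \<in> {-1, 0, 1})
     \<and> (\<exists>k\<in>{1..n}. a k \<noteq> 0)
     \<and> a (Max {k\<in>{1..n}. a k \<noteq> 0}) = 1
     \<and> (\<forall>k\<in>{1..n}. \<forall>l\<in>{1..n}. k < l \<and> a k \<noteq> 0 \<and> a l \<noteq> 0
            \<and> (\<forall>m. k < m \<and> m < l \<longrightarrow> a m = 0) \<longrightarrow> a k = - a l)
     \<and> (\<Sum>k=1..n. real k * a k) = real i"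
    have "\<forall>j\<in>{1..n}. cs a n j = 0 \<or> cs a n j = 1"
      by (rule comb2[OF R[THEN conjunct1] R[THEN conjunct2, THEN conjunct2, THEN conjunct1]
        R[THEN conjunct2, THEN conjunct2, THEN conjunct2, THEN conjunct1]])
    moreover have "(\<Sum>k=1..n. real k * a k) = real i"
      by (rule R[THEN conjunct2, THEN conjunct2, THEN conjunct2, THEN conjunct2])
    ultimately show "positive_weight n i (vec_of_coeffs n a)" using L by simp
  qed
qed

end
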